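(* Let $A\subset\mathbb{R}^d$ have positive reach and let $B\subset\mathbb{R}^d$ satisfy $A\subset B\subset\mathrm{UP}(A)$. If $B$ is star-shaped relative to $A$, i.e. for every $p\in B$ the line segment from $p$ to $\xi_A(p)$ is contained in $B$, then $B$ deformation retracts onto $A$.
   Context: For closed $A\subset\mathbb{R}^d$: $\mathrm{UP}(A)$ is the set of points of $\mathbb{R}^d$ with a unique nearest point in $A$, $\xi_A:\mathrm{UP}(A)\to A$ maps a point to that nearest point, $\mathrm{Med}(A)=\mathbb{R}^d\setminus\mathrm{UP}(A)$, and the reach is $\tau_A=\inf_{p\in A}d(p,\mathrm{Med}(A))$; positive reach means $\tau_A>0$. *)

theory Defs
  imports "HOL-Analysis.Analysis"
begin

definition nearest_pt :: "'a::euclidean_space set \<Rightarrow> 'a \<Rightarrow> 'a \<Rightarrow> bool" where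
  "nearest_pt A x p \<longleftrightarrow> p \<in> A \<and> (\<forall>q\<in>A. dist x p \<le> dist x q)"

definition UP :: "'a::euclidean_space set \<Rightarrow> 'a set" where
  "UP A = {x. \<exists>!p. nearest_pt A x p}"

text \<open>xi_A: the projection onto A (meaningful on UP(A))\<close>
definition xi :: "'a::euclidean_space set \<Rightarrow> 'a \<Rightarrow> 'a" where
  "xi A x = (THE p. nearest_pt A x p)"

definition Med :: "'a::euclidean_space set \<Rightarrow> 'a set" where
  "Med A = UNIV - UP A"

text \<open>Reach, as an extended real (infimum over empty sets is +infinity)\<close>
definition reach :: "'a::euclidean_space set \<Rightarrow> ereal" where
  "reach A = (INF p\<in>A. INF m\<in>Med A. ereal (dist p m))"

definition deformation_retracts_onto :: "'a::topological_space set \<Rightarrow> 'a set \<Rightarrow> bool" where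
  "deformation_retracts_onto B A \<longleftrightarrow> A \<subseteq> B \<and>
     (\<exists>H :: real \<times> 'a \<Rightarrow> 'a.
        continuous_on ({0..1} \<times> B) H \<and> H ` ({0..1} \<times> B) \<subseteq> B \<and>
        (\<forall>x\<in>B. H (0, x) = x) \<and> (\<forall>x\<in>B. H (1, x) \<in> A) \<and>
        (\<forall>t\<in>{0..1}. \<forall>a\<in>A. H (t, a) = a))"

end

theory Submission
  imports Defs
begin

lemma xi_props:
  assumes "x \<in> UP A"
  shows "nearest_pt A x (xi A x)" "\<And>p. nearest_pt A x p \<Longrightarrow> p = xi A x"
proof -
  have ex: "\<exists>!p. nearest_pt A x p" using assms by (simp add: UP_def)
  show "nearest_pt A x (xi A x)" unfolding xi_def by (rule theI'[OF ex])
  then show "\<And>p. nearest_pt A x p \<Longrightarrow> p = xi A x" using ex by blast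
qed

lemma xi_cont:
  fixes A :: "'a::euclidean_space set"
  assumes clA: "closed A"
  shows "continuous_on (UP A) (xi A)"
  unfolding continuous_on_sequentially
proof (intro allI ballI impI, elim conjE)
  fix s :: "nat \<Rightarrow> 'a" and a
  assume aU: "a \<in> UP A" and sU: "\<forall>n. s n \<in> UP A" and sa: "s \<longlonglongrightarrow> a"
  show "(xi A \<circ> s) \<longlonglongrightarrow> xi A a"
  proof (rule ccontr)
    assume "\<not> (xi A \<circ> s) \<longlonglongrightarrow> xi A a"
    then obtain e where e: "e > 0" and ex: "\<forall>N. \<exists>n\<ge>N. dist (xi A (s n)) (xi A a) \<ge> e"
      unfolding lim_sequentially by (auto simp: not_less)
    define S where "S = {n. dist (xi A (s n)) (xi A a) \<ge> e}"
    have "infinite S" unfolding S_def infinite_nat_iff_unbounded_le using ex by auto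
    then obtain r :: "nat \<Rightarrow> nat" where r: "strict_mono r" "\<forall>n. r n \<in> S"
      using infinite_enumerate by blast
    define y where "y n = xi A (s (r n))" for n
    have yS: "dist (y n) (xi A a) \<ge> e" for n using r(2) by (simp add: S_def y_def)
    have nq: "nearest_pt A (s n) (xi A (s n))" for n using xi_props(1) sU by blast
    have qA: "xi A a \<in> A" using xi_props(1)[OF aU] by (simp add: nearest_pt_def)
    define q where "q = xi A a"
    have "bounded (range s)" using sa by (simp add: convergent_imp_bounded)
    then obtain M where M: "\<And>n. norm (s n) \<le> M" by (auto simp: bounded_iff)
    have yb: "norm (y n) \<le> 2*M + norm q" for n
    proof -
      have "dist (s (r n)) (y n) \<le> dist (s (r n)) q"
        using nq[of "r n"] qA unfolding nearest_pt_def y_def q_def by blast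
      moreover have "dist (s (r n)) q \<le> M + norm q" using M[of "r n"]
        by (simp add: dist_norm norm_triangle_ineq4 order_trans[OF norm_triangle_ineq4])
      moreover have "norm (y n) \<le> norm (s (r n)) + dist (s (r n)) (y n)"
        by (metis dist_commute dist_norm norm_triangle_sub add.commute)
      ultimately show ?thesis using M[of "r n"] by linarith
    qed
    have yA: "y n \<in> A" for n using nq[of "r n"] by (simp add: nearest_pt_def y_def)
    have "compact (A \<inter> cball 0 (2*M + norm q))"
      using clA by (simp add: compact_Int_closed compact_cball closed_Int_compact)
    then have "seq_compact (A \<inter> cball 0 (2*M + norm q))" by (rule compact_imp_seq_compact)
    moreover have "\<forall>n. y n \<in> A \<inter> cball 0 (2*M + norm q)" using yA yb by auto
    ultimately obtain l r2 where l: "l \<in> A \<inter> cball 0 (2*M + norm q)" "strict_mono (r2::nat\<Rightarrow>nat)"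
       "(y \<circ> r2) \<longlonglongrightarrow> l" by (rule seq_compactE)
    have sa2: "(\<lambda>n. s (r (r2 n))) \<longlonglongrightarrow> a"
      using LIMSEQ_subseq_LIMSEQ[OF LIMSEQ_subseq_LIMSEQ[OF sa r(1)] l(2)] by (simp add: o_def)
    have yl: "(\<lambda>n. y (r2 n)) \<longlonglongrightarrow> l" using l(3) by (simp add: o_def)
    have "nearest_pt A a l"
      unfolding nearest_pt_def
    proof (intro conjI ballI)
      show "l \<in> A" using l(1) by simp
      fix p assume pA: "p \<in> A"
      have "dist (s (r (r2 n))) (y (r2 n)) \<le> dist (s (r (r2 n))) p" for n
        using nq[of "r (r2 n)"] pA unfolding nearest_pt_def y_def by blast
      then show "dist a l \<le> dist a p"
        by (intro tendsto_le[OF trivial_limit_sequentially tendsto_dist[OF sa2 tendsto_const]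
              tendsto_dist[OF sa2 yl]]) auto
    qed
    then have "l = q" using xi_props(2)[OF aU] q_def by blast
    moreover have "dist l q \<ge> e"
      using tendsto_le[OF trivial_limit_sequentially tendsto_dist[OF yl tendsto_const] tendsto_const]
        yS q_def by auto
    ultimately show False using e by simp
  qed
qed

theorem mainTheorem13:
  fixes A B :: "'a::euclidean_space set"
  assumes "closed A"
    and "reach A > 0"
    and "A \<subseteq> B" and "B \<subseteq> UP A"
    and "\<forall>p\<in>B. closed_segment p (xi A p) \<subseteq> B"
  shows "deformation_retracts_onto B A"
proof -
  define H where "H = (\<lambda>(t::real, x::'a). (1 - t) *\<^sub>R x + t *\<^sub>R xi A x)"
  have cxi: "continuous_on B (xi A)" using xi_cont[OF assms(1)] assms(4) continuous_on_subset by blast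
  have "continuous_on ({0..1} \<times> B) H"
    unfolding H_def case_prod_beta
    by (intro continuous_intros continuous_on_compose2[OF cxi]) auto
  moreover have "H ` ({0..1} \<times> B) \<subseteq> B"
  proof clarify
    fix t x assume t: "t \<in> {0..(1::real)}" and x: "x \<in> B"
    have "H (t, x) \<in> closed_segment x (xi A x)"
      unfolding H_def closed_segment_def using t by auto
    then show "H (t, x) \<in> B" using assms(5) x by blast
  qed
  moreover have "\<forall>x\<in>B. H (1, x) \<in> A"
    using xi_props(1) assms(4) by (auto simp: H_def nearest_pt_def)
  moreover have "\<forall>t\<in>{0..1}. \<forall>a\<in>A. H (t, a) = a"
  proof (intro ballI)
    fix t a assume "a \<in> A"
    then have "nearest_pt A a a" by (simp add: nearest_pt_def)
    then have "a = xi A a" using xi_props(2) assms(3,4) \<open>a \<in> A\<close> by blast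
    then show "H (t, a) = a" by (simp add: H_def algebra_simps flip: scaleR_add_left)
  qed
  ultimately show ?thesis unfolding deformation_retracts_onto_def using assms(3)
    by (auto simp: H_def)
qed

end
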